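(* Let $\mathbb{F}$ be a field of characteristic $0$ and $h=\mathsf{u}_1^{\alpha_1}\cdots\mathsf{u}_t^{\alpha_t}\in\mathbb{F}[x]$ with $\mathsf{u}_i$ distinct monic irreducible polynomials, $\alpha_1,\dots,\alpha_k\geq2$, $\alpha_{k+1}=\dots=\alpha_t=1$, and $k\geq1$. Let $\Theta_1=\mathsf{u}_1\cdots\mathsf{u}_k$. Then there is $\nu\in\mathbb{F}[x]$, unique modulo $\Theta_1\mathbb{F}[x]$, with $\nu\delta_0(1)\equiv1\pmod{\Theta_1\mathbb{F}[x]}$, and any such $\nu$ satisfies: (a) $\nu\pi_h'-1\equiv\nu\frac{\pi_hh'}{h}\pmod{\Theta_1\mathbb{F}[x]}$; (b) $\nu\pi_h'\equiv\frac{1}{1-\alpha_j}\pmod{\mathsf{u}_j\mathbb{F}[x]}$ for all $1\leq j\leq k$.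
   Context: $\pi_h=\mathsf{u}_1\cdots\mathsf{u}_t$, so $\pi_hh'/h\in\mathbb{F}[x]$, and $\delta_0(1)=\pi_h'-\pi_hh'/h$. *)

theory Defs
  imports "HOL-Computational_Algebra.Polynomial_Factorial"
begin

(* delta_0(1) = pi_h' - pi_h h'/h, where pi_h = u_1...u_t is the radical of h *)
definition delta0_one :: "'a::field poly \<Rightarrow> 'a poly \<Rightarrow> 'a poly" where
  "delta0_one h pih = pderiv pih - (pih * pderiv h) div h"

end

theory Submission
  imports Defs
begin

lemma bezout_irr:
  fixes p a :: "'a::field poly"
  assumes irr: "irreducible p" and nd: "\<not> p dvd a"
  shows "\<exists>x. p dvd x * a - 1"
proof -
  define S where "S = {g. g \<noteq> 0 \<and> (\<exists>x y. g = x * a + y * p)}"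
  have "a \<noteq> 0" using nd by auto
  moreover have "a = 1 * a + 0 * p" by simp
  ultimately have aS: "a \<in> S" unfolding S_def by blast
  define g where "g = arg_min degree (\<lambda>g. g \<in> S)"
  have gS: "g \<in> S" unfolding g_def by (rule arg_min_natI[of "\<lambda>g. g \<in> S", OF aS])
  have gmin: "degree g \<le> degree h" if "h \<in> S" for h
    unfolding g_def by (rule arg_min_nat_le[of "\<lambda>g. g \<in> S", OF that])
  obtain x y where gxy: "g = x * a + y * p" and gnz: "g \<noteq> 0" using gS unfolding S_def by blast
  have gdvd: "g dvd b" if "b = x' * a + y' * p" for b x' y'
  proof (rule ccontr)
    assume ndv: "\<not> g dvd b"
    define r where "r = b mod g"
    have rnz: "r \<noteq> 0" using ndv unfolding r_def by (simp add: mod_eq_0_iff_dvd)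
    have "r = b - (b div g) * g" unfolding r_def by (simp add: minus_div_mult_eq_mod)
    also have "\<dots> = (x' - (b div g) * x) * a + (y' - (b div g) * y) * p"
      unfolding that gxy by (simp add: algebra_simps)
    finally have "r \<in> S" using rnz unfolding S_def by blast
    then have "degree g \<le> degree r" by (rule gmin)
    moreover have "degree r < degree g" unfolding r_def using gnz rnz r_def by (simp add: degree_mod_less')
    ultimately show False by simp
  qed
  have ga: "g dvd a" by (rule gdvd[of a 1 0]) simp
  have gp: "g dvd p" by (rule gdvd[of p 0 1]) simp
  then obtain c where c: "p = g * c" by (auto elim: dvdE)
  have "is_unit g"
  proof (rule ccontr)
    assume "\<not> is_unit g"
    then have "is_unit c" using irreducibleD[OF irr c] by blast
    then have "p dvd g" using c by (metis dvd_mult_unit_iff dvd_refl)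
    then show False using ga nd dvd_trans by blast
  qed
  then obtain c0 where c0: "g = [:c0:]" "c0 \<noteq> 0"
    using gnz by (auto simp: is_unit_poly_iff)
  have "smult (1 / c0) x * a - 1 = p * (- smult (1 / c0) y)"
  proof -
    have "smult (1 / c0) g = 1" using c0 by simp
    then show ?thesis unfolding gxy by (simp add: algebra_simps smult_add_right)
  qed
  then have "p dvd smult (1 / c0) x * a - 1" by (metis dvdI)
  then show ?thesis by blast
qed

lemma prod_inv:
  fixes f :: "'b \<Rightarrow> 'a::comm_ring_1"
  assumes "finite S" "\<forall>j\<in>S. \<exists>x. f j dvd x * a - 1"
  shows "\<exists>x. prod f S dvd x * a - 1"
  using assms
proof (induction S rule: finite_induct)
  case empty
  show ?case by simp
next
  case (insert j F)
  then obtain x where x: "prod f F dvd x * a - 1" by auto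
  obtain y where y: "f j dvd y * a - 1" using insert by auto
  have "(x + y - x * y * a) * a - 1 = - ((y * a - 1) * (x * a - 1))"
    by (simp add: algebra_simps)
  moreover have "f j * prod f F dvd (y * a - 1) * (x * a - 1)"
    using x y by (rule mult_dvd_mono[rotated])
  ultimately have "prod f (insert j F) dvd (x + y - x * y * a) * a - 1"
    using insert by simp
  then show ?case by blast
qed


lemma prime_dvd_prod_set:
  fixes p :: "'a::field poly"
  assumes "prime_elem p" "finite A" "p dvd (\<Prod>i\<in>A. f i)"
  shows "\<exists>i\<in>A. p dvd f i"
  using assms(2,3)
proof (induction A rule: finite_induct)
  case empty then show ?case using assms(1) prime_elem_not_unit by auto
next
  case (insert x F) then show ?case using prime_elem_dvd_mult_iff[OF assms(1)] by auto
qed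

lemma prod_pderiv:
  fixes u :: "nat \<Rightarrow> 'a::field poly"
  assumes "finite A" "\<forall>i\<in>A. \<alpha> i \<ge> 1"
  shows "(\<Prod>i\<in>A. u i) * pderiv (\<Prod>i\<in>A. u i ^ \<alpha> i) =
     (\<Prod>i\<in>A. u i ^ \<alpha> i) * (\<Sum>i\<in>A. smult (of_nat (\<alpha> i)) (pderiv (u i) * (\<Prod>l\<in>A-{i}. u l)))"
proof -
  have "(\<Prod>i\<in>A. u i) * pderiv (\<Prod>i\<in>A. u i ^ \<alpha> i) =
     (\<Sum>i\<in>A. (\<Prod>i\<in>A. u i) * ((\<Prod>l\<in>A-{i}. u l ^ \<alpha> l) * pderiv (u i ^ \<alpha> i)))"
    by (simp add: pderiv_prod sum_distrib_left)
  also have "\<dots> = (\<Sum>i\<in>A. (\<Prod>i\<in>A. u i ^ \<alpha> i) * smult (of_nat (\<alpha> i)) (pderiv (u i) * (\<Prod>l\<in>A-{i}. u l)))"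
  proof (rule sum.cong[OF refl])
    fix i assume i: "i \<in> A"
    have e1: "(\<Prod>i\<in>A. u i) = u i * (\<Prod>l\<in>A-{i}. u l)"
      using i assms(1) by (simp add: prod.remove)
    have e2: "(\<Prod>i\<in>A. u i ^ \<alpha> i) = u i ^ \<alpha> i * (\<Prod>l\<in>A-{i}. u l ^ \<alpha> l)"
      using i assms(1) by (simp add: prod.remove)
    have e3: "u i * u i ^ (\<alpha> i - 1) = u i ^ \<alpha> i"
      using assms(2) i by (metis Suc_diff_le diff_Suc_1 power_Suc)
    show "(\<Prod>i\<in>A. u i) * ((\<Prod>l\<in>A-{i}. u l ^ \<alpha> l) * pderiv (u i ^ \<alpha> i)) =
        (\<Prod>i\<in>A. u i ^ \<alpha> i) * smult (of_nat (\<alpha> i)) (pderiv (u i) * (\<Prod>l\<in>A-{i}. u l))"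
      unfolding e1 e2 pderiv_power
      by (simp add: algebra_simps flip: e3)
  qed
  finally show ?thesis by (simp add: sum_distrib_left)
qed


theorem lemma6p5:
  fixes u :: "nat \<Rightarrow> 'a::field_char_0 poly"
    and \<alpha> :: "nat \<Rightarrow> nat"
    and t k :: nat
    and h :: "'a poly"
  assumes irr: "\<forall>i\<in>{1..t}. irreducible (u i)"
    and monic: "\<forall>i\<in>{1..t}. lead_coeff (u i) = 1"
    and dist: "inj_on u {1..t}"
    and k1: "1 \<le> k" and kt: "k \<le> t"
    and mult_ge2: "\<forall>i\<in>{1..k}. \<alpha> i \<ge> 2"
    and mult_1: "\<forall>i\<in>{k+1..t}. \<alpha> i = 1"
    and h_def: "h = (\<Prod>i\<in>{1..t}. u i ^ \<alpha> i)"
  defines "\<pi> \<equiv> (\<Prod>i\<in>{1..t}. u i)"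
    and "\<Theta> \<equiv> (\<Prod>i\<in>{1..k}. u i)"
  shows "(\<exists>\<nu>. \<Theta> dvd (\<nu> * delta0_one h \<pi> - 1))
       \<and> (\<forall>\<nu>1 \<nu>2. \<Theta> dvd (\<nu>1 * delta0_one h \<pi> - 1) \<longrightarrow>
                  \<Theta> dvd (\<nu>2 * delta0_one h \<pi> - 1) \<longrightarrow> \<Theta> dvd (\<nu>1 - \<nu>2))
       \<and> (\<forall>\<nu>. \<Theta> dvd (\<nu> * delta0_one h \<pi> - 1) \<longrightarrow>
              \<Theta> dvd ((\<nu> * pderiv \<pi> - 1) - \<nu> * ((\<pi> * pderiv h) div h))
            \<and> (\<forall>j\<in>{1..k}. u j dvd (\<nu> * pderiv \<pi> - [:1 / (1 - of_nat (\<alpha> j)):])))"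
proof -
  define A where "A = {1..t}"
  have finA: "finite A" by (simp add: A_def)
  have sub: "{1..k} \<subseteq> A" using kt by (auto simp: A_def)
  have alpha1: "\<forall>i\<in>A. \<alpha> i \<ge> 1"
  proof
    fix i assume "i \<in> A"
    then show "\<alpha> i \<ge> 1" using mult_ge2 mult_1 by (cases "i \<le> k") (force simp: A_def)+
  qed
  define P where "P i = (\<Prod>l\<in>A-{i}. u l)" for i
  define Q where "Q = (\<Sum>i\<in>A. smult (of_nat (\<alpha> i)) (pderiv (u i) * P i))"
  have unz: "u i \<noteq> 0" if "i \<in> A" for i using irr that by (metis A_def irreducible_not_unit dvd_0_left zero_neq_one
      irreducible_def)
  have hnz: "h \<noteq> 0" using unz finA by (auto simp: h_def A_def)
  have hq: "\<pi> * pderiv h = h * Q"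
    unfolding \<pi>_def h_def Q_def P_def A_def[symmetric]
    using prod_pderiv[OF finA alpha1, of u] by simp
  have divQ: "(\<pi> * pderiv h) div h = Q" using hq hnz by simp
  have dpi: "pderiv \<pi> = (\<Sum>i\<in>A. pderiv (u i) * P i)"
    unfolding \<pi>_def A_def[symmetric] P_def by (simp add: pderiv_prod mult.commute)
  define \<delta> where "\<delta> = delta0_one h \<pi>"
  have \<delta>: "\<delta> = (\<Sum>i\<in>A. smult (1 - of_nat (\<alpha> i)) (pderiv (u i) * P i))"
    unfolding \<delta>_def delta0_one_def divQ dpi Q_def
    by (simp add: sum_subtractf[symmetric] smult_diff_left)
  have prime: "prime_elem (u i)" if "i \<in> A" for i
    using irr that by (auto simp: A_def intro: field_poly_irreducible_imp_prime)
  have dvdP: "u j dvd P i" if "i \<in> A" "j \<in> A" "i \<noteq> j" for i j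
    unfolding P_def using that finA by (intro dvd_prodI) auto
  have ndvdP: "\<not> u j dvd P j" if jA0: "j \<in> A" for j
  proof
    assume "u j dvd P j"
    then have "\<exists>l\<in>A-{j}. u j dvd u l"
      unfolding P_def by (rule prime_dvd_prod_set[OF prime[OF jA0], rotated]) (use finA in simp)
    then obtain l where l: "l \<in> A - {j}" "u j dvd u l" by blast
    then obtain c where c: "u l = u j * c" by (auto elim: dvdE)
    have irl: "irreducible (u l)" using irr l by (auto simp: A_def)
    have nu: "\<not> is_unit (u j)" using prime_elem_not_unit[OF prime[OF jA0]] .
    have "is_unit (u j) \<or> is_unit c" using irreducibleD[OF irl c] .
    then have "is_unit c" using nu by blast
    then obtain c0 where c0: "c = [:c0:]" using is_unit_poly_iff by blast
    have "lead_coeff (u l) = lead_coeff (u j) * c0" using c c0 by (simp add: lead_coeff_mult)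
    then have "c0 = 1" using monic l jA0 by (auto simp: A_def)
    then have "u l = u j" using c c0 by simp
    moreover have "l \<in> {1..t}" "j \<in> {1..t}" "l \<noteq> j" using l jA0 by (auto simp: A_def)
    ultimately show False using inj_onD[OF dist] by blast
  qed
  have ndvdD: "\<not> u j dvd pderiv (u j)" if "j \<in> A" for j
  proof
    assume d: "u j dvd pderiv (u j)"
    have "degree (u j) \<noteq> 0"
    proof
      assume "degree (u j) = 0"
      then obtain a where a: "u j = [:a:]" by (rule degree_eq_zeroE)
      have "a \<noteq> 0" using a unz[OF that] by auto
      then have "is_unit (u j)" using a by (simp add: is_unit_poly_iff dvd_field_iff)
      then show False using prime_elem_not_unit[OF prime[OF that]] by blast
    qed
    then have "pderiv (u j) \<noteq> 0" by (simp add: pderiv_eq_0_iff)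
    then have "degree (u j) \<le> degree (pderiv (u j))" using d by (simp add: dvd_imp_degree_le)
    then show False using \<open>degree (u j) \<noteq> 0\<close> by (simp add: degree_pderiv)
  qed
  have cnz: "(1 - of_nat (\<alpha> j) :: 'a) \<noteq> 0" if "j \<in> {1..k}" for j
  proof
    assume "(1 - of_nat (\<alpha> j) :: 'a) = 0"
    then have "(of_nat (\<alpha> j) :: 'a) = of_nat 1" by simp
    then have "\<alpha> j = 1" using of_nat_eq_iff by blast
    moreover have "\<alpha> j \<ge> 2" using mult_ge2 that by blast
    ultimately show False by simp
  qed
  have congD: "u j dvd \<delta> - smult (1 - of_nat (\<alpha> j)) (pderiv (u j) * P j)" if "j \<in> A" for j
  proof -
    have "\<delta> - smult (1 - of_nat (\<alpha> j)) (pderiv (u j) * P j) =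
        (\<Sum>i\<in>A-{j}. smult (1 - of_nat (\<alpha> i)) (pderiv (u i) * P i))"
      unfolding \<delta> using finA that by (simp add: sum.remove)
    also have "u j dvd \<dots>"
      using dvdP that by (intro dvd_sum) (auto intro: dvd_smult dvd_mult)
    finally show ?thesis .
  qed
  have congP: "u j dvd pderiv \<pi> - pderiv (u j) * P j" if "j \<in> A" for j
  proof -
    have "pderiv \<pi> - pderiv (u j) * P j = (\<Sum>i\<in>A-{j}. pderiv (u i) * P i)"
      unfolding dpi using finA that by (simp add: sum.remove)
    also have "u j dvd \<dots>"
      using dvdP that by (intro dvd_sum) (auto intro: dvd_mult)
    finally show ?thesis .
  qed
  have ndj: "\<not> u j dvd \<delta>" if "j \<in> {1..k}" for j
  proof
    have jA: "j \<in> A" using that sub by auto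
    assume "u j dvd \<delta>"
    then have "u j dvd smult (1 - of_nat (\<alpha> j)) (pderiv (u j) * P j)"
      using dvd_diff[OF \<open>u j dvd \<delta>\<close> congD[OF jA]] by simp
    then have "u j dvd pderiv (u j) * P j" using dvd_smult_cancel cnz[OF that] by blast
    then show False using prime_elem_dvd_mult_iff[OF prime[OF jA]] ndvdP[OF jA] ndvdD[OF jA] by blast
  qed
  have invj: "\<forall>j\<in>{1..k}. \<exists>x. u j dvd x * \<delta> - 1"
  proof
    fix j assume j: "j \<in> {1..k}"
    then have "irreducible (u j)" using irr kt by auto
    then show "\<exists>x. u j dvd x * \<delta> - 1" using bezout_irr ndj[OF j] by blast
  qed
  have ex: "\<exists>\<nu>. \<Theta> dvd (\<nu> * \<delta> - 1)"
    unfolding \<Theta>_def by (rule prod_inv[OF _ invj]) simp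
  have uniq: "\<Theta> dvd (\<nu>1 - \<nu>2)" if "\<Theta> dvd (\<nu>1 * \<delta> - 1)" "\<Theta> dvd (\<nu>2 * \<delta> - 1)" for \<nu>1 \<nu>2
  proof -
    have "\<Theta> dvd (\<nu>1 * \<delta> - 1) - (\<nu>2 * \<delta> - 1)" using that by (rule dvd_diff)
    then have d: "\<Theta> dvd (\<nu>1 - \<nu>2) * \<delta>" by (simp add: algebra_simps)
    have "\<nu>1 - \<nu>2 = \<nu>1 * ((\<nu>1 - \<nu>2) * \<delta>) - (\<nu>1 * \<delta> - 1) * (\<nu>1 - \<nu>2)"
      by (simp add: algebra_simps)
    also have "\<Theta> dvd \<dots>" using dvd_diff[OF dvd_mult[OF d, of \<nu>1] dvd_mult2[OF that(1), of "\<nu>1 - \<nu>2"]] .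
    finally show ?thesis .
  qed
  have partA: "\<Theta> dvd ((\<nu> * pderiv \<pi> - 1) - \<nu> * ((\<pi> * pderiv h) div h))"
    if "\<Theta> dvd (\<nu> * \<delta> - 1)" for \<nu>
  proof -
    have "(\<nu> * pderiv \<pi> - 1) - \<nu> * ((\<pi> * pderiv h) div h) = \<nu> * \<delta> - 1"
      unfolding \<delta>_def delta0_one_def by (simp add: algebra_simps)
    then show ?thesis using that by metis
  qed
  have partB: "u j dvd (\<nu> * pderiv \<pi> - [:1 / (1 - of_nat (\<alpha> j)):])"
    if "\<Theta> dvd (\<nu> * \<delta> - 1)" "j \<in> {1..k}" for \<nu> j
  proof -
    define c :: 'a where "c = 1 - of_nat (\<alpha> j)"
    have c0: "c \<noteq> 0" using cnz[OF that(2)] by (simp add: c_def)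
    have jA: "j \<in> A" using that(2) sub by auto
    have "u j dvd \<Theta>" unfolding \<Theta>_def using that(2) by (intro dvd_prodI) auto
    then have d1: "u j dvd \<nu> * \<delta> - 1" using that(1) dvd_trans by blast
    have d2: "u j dvd \<nu> * (\<delta> - smult c (pderiv (u j) * P j))"
      using congD[OF jA] by (simp add: c_def)
    have d3: "u j dvd \<nu> * smult c (pderiv \<pi> - pderiv (u j) * P j)"
      using congP[OF jA] by (intro dvd_mult dvd_smult)
    have "u j dvd (\<nu> * \<delta> - 1) - \<nu> * (\<delta> - smult c (pderiv (u j) * P j)) + \<nu> * smult c (pderiv \<pi> - pderiv (u j) * P j)"
      using dvd_add[OF dvd_diff[OF d1 d2] d3] .
    also have "(\<nu> * \<delta> - 1) - \<nu> * (\<delta> - smult c (pderiv (u j) * P j)) + \<nu> * smult c (pderiv \<pi> - pderiv (u j) * P j)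
       = smult c (\<nu> * pderiv \<pi> - [:1 / c:])"
      using c0 by (simp add: algebra_simps smult_diff_right)
    finally have "u j dvd smult c (\<nu> * pderiv \<pi> - [:1 / c:])" .
    then have "u j dvd \<nu> * pderiv \<pi> - [:1 / c:]" using c0 by (rule dvd_smult_cancel)
    then show ?thesis by (simp add: c_def)
  qed
  show ?thesis using ex uniq partA partB unfolding \<delta>_def by blast
qed

end
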